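(* Let $f:\mathbb{F}_{2^n}\to\mathbb{F}_{2^n}$ be APN. Then: (a) $M_1(f)+M_2(f)\geq 1$. For $n$ even, equality holds if and only if $f$ is almost-3-to-1. For $n$ odd, equality holds if and only if there is a unique element of $\mathrm{Im}(f)$ with exactly two preimages and all remaining elements of $\mathrm{Im}(f)$ have exactly three preimages. (b) $3M_1(f)+4M_2(f)+3M_3(f)\geq 2^n+2$, with equality if and only if $N(f)=3\cdot 2^n-2$ and $M_r(f)=0$ for all $r>4$; in that case $M_1(f)+M_2(f)=2M_4(f)+1$.
   Context: A map $f:\mathbb{F}_{2^n}\to\mathbb{F}_{2^n}$ is APN (almost perfect nonlinear) if for every $a\neq 0$ and every $b$, the equation $f(x+a)+f(x)=b$ has at most 2 solutions (i.e. $f$ is differentially 2-uniform). $M_r(f)$ is the number of $y$ with exactly $r$ preimages under $f$; $N(f)$ is the number of pairs $(x,y)$ with $f(x)=f(y)$. $f$ is almost-3-to-1 if there is a unique element of $\mathrm{Im}(f)$ with exactly one preimage and every other element of $\mathrm{Im}(f)$ has exactly 3 preimages. *)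

theory Defs
  imports Main
begin

text \<open>Finite field F_{2^n}: a type of class finite field with CARD = 2^n.\<close>

definition APN :: "('a::{field,finite} \<Rightarrow> 'a) \<Rightarrow> bool" where
  "APN f \<longleftrightarrow> (\<forall>a b. a \<noteq> 0 \<longrightarrow> card {x. f (x + a) + f x = b} \<le> 2)"

definition M :: "nat \<Rightarrow> ('a::finite \<Rightarrow> 'b) \<Rightarrow> nat" where
  "M r f = card {y. card (f -` {y}) = r}"

definition Ncoll :: "('a::finite \<Rightarrow> 'b) \<Rightarrow> nat" where
  "Ncoll f = card {(x, y). f x = f y}"

definition almost_3_to_1 :: "('a::finite \<Rightarrow> 'b) \<Rightarrow> bool" where
  "almost_3_to_1 f \<longleftrightarrow>
     (\<exists>!y. y \<in> range f \<and> card (f -` {y}) = 1) \<and>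
     (\<forall>z \<in> range f. card (f -` {z}) \<noteq> 1 \<longrightarrow> card (f -` {z}) = 3)"

end

theory Submission imports Defs "HOL-Number_Theory.Number_Theory" begin
lemma char2:
  assumes "card (UNIV :: 'a::{field,finite} set) = 2 ^ n"
  shows "(x::'a) + x = 0"
proof -
  have pos: "CHAR('a) > 0" by (rule finite_imp_CHAR_pos) simp
  have pr: "prime CHAR('a)" using prime_CHAR_semidom pos by blast
  have "CHAR('a) dvd 2 ^ n" using CHAR_dvd_CARD[where 'a='a] assms by simp
  hence "CHAR('a) dvd 2" using pr prime_dvd_power by blast
  hence c2: "CHAR('a) = 2" using pr primes_dvd_imp_eq two_is_prime_nat by blast
  have "(2::'a) = 0" using of_nat_CHAR[where 'a='a] c2 by simp
  thus ?thesis by (metis mult_2 mult_zero_left)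
qed

lemma sumI: "(\<Sum>y\<in>UNIV. if P y then (c::int) else 0) = c * int (card {y::'a::finite. P y})"
  by (simp add: sum.If_cases)

lemma sum_fib: "(\<Sum>y\<in>UNIV. card ((f::'a::finite \<Rightarrow> 'b::finite) -` {y})) = card (UNIV::'a set)"
proof -
  have "card (UNIV::'a set) = card (\<Union>y\<in>UNIV. f -` {y})" by (simp add: vimage_UN[symmetric] )
  also have "\<dots> = (\<Sum>y\<in>UNIV. card (f -` {y}))" by (rule card_UN_disjoint) auto
  finally show ?thesis by simp
qed

lemma Ncoll_sum: "Ncoll (f::'a::finite \<Rightarrow> 'b::finite) = (\<Sum>y\<in>UNIV. card (f -` {y}) * card (f -` {y}))"
proof -
  have "{(x, y). f x = f y} = (\<Union>z\<in>UNIV. (f -` {z}) \<times> (f -` {z}))" by auto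
  hence "Ncoll f = card (\<Union>z\<in>UNIV. (f -` {z}) \<times> (f -` {z}))" by (simp add: Ncoll_def)
  also have "\<dots> = (\<Sum>z\<in>UNIV. card ((f -` {z}) \<times> (f -` {z})))" by (rule card_UN_disjoint) auto
  finally show ?thesis by (simp add: card_cartesian_product)
qed

lemma Ncoll_bound:
  fixes f :: "'a::{field,finite} \<Rightarrow> 'a"
  assumes card: "card (UNIV :: 'a set) = 2 ^ n" and apn: "APN f"
  shows "Ncoll f + 2 \<le> 3 * card (UNIV :: 'a set)"
proof -
  let ?q = "card (UNIV :: 'a set)"
  define Dg where "Dg = (\<lambda>x::'a. (x,x)) ` UNIV"
  define D where "D = {(x::'a,y). x \<noteq> y \<and> f x = f y}"
  have split: "{(x, y). f x = f y} = Dg \<union> D" by (auto simp: Dg_def D_def)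
  have dis: "Dg \<inter> D = {}" by (auto simp: Dg_def D_def)
  have cDg: "card Dg = ?q" unfolding Dg_def by (rule card_image) (auto intro: inj_onI)
  have sub: "D \<subseteq> (\<Union>a\<in>UNIV-{0}. (\<lambda>x. (x,x+a)) ` {x. f (x+a) + f x = 0})"
  proof
    fix p assume "p \<in> D"
    then obtain x y where p: "p = (x,y)" "x \<noteq> y" "f x = f y" by (auto simp: D_def)
    have "f (x + (y - x)) + f x = 0" using p char2[OF card] by simp
    moreover have "y - x \<noteq> 0" using p by simp
    moreover have "p = (x, x + (y - x))" using p by simp
    ultimately show "p \<in> (\<Union>a\<in>UNIV-{0}. (\<lambda>x. (x,x+a)) ` {x. f (x+a) + f x = 0})" by blast
  qed
  have "card D \<le> card (\<Union>a\<in>UNIV-{0}. (\<lambda>x. (x,x+a)) ` {x. f (x+a) + f x = 0})"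
    by (rule card_mono[OF _ sub]) simp
  also have "\<dots> \<le> (\<Sum>a\<in>UNIV-{0}. card ((\<lambda>x. (x,x+a)) ` {x. f (x+a) + f x = 0}))"
    by (rule card_UN_le) simp
  also have "\<dots> \<le> (\<Sum>a\<in>UNIV-{0::'a}. 2)"
  proof -
    have pt: "card ((\<lambda>x. (x,x+a)) ` {x. f (x+a) + f x = 0}) \<le> 2" if "a \<noteq> 0" for a
    proof -
      have "card {x. f (x+a) + f x = 0} \<le> 2" using apn that by (simp add: APN_def)
      thus ?thesis using card_image_le[of "{x. f (x+a) + f x = 0}" "\<lambda>x. (x,x+a)"] by simp
    qed
    show ?thesis by (intro sum_mono) (use pt in auto)
  qed
  also have "\<dots> = 2 * (?q - 1)" by (simp add: card_Diff_singleton)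
  finally have "card D \<le> 2 * (?q - 1)" .
  moreover have "Ncoll f = card Dg + card D"
    unfolding Ncoll_def split by (rule card_Un_disjoint) (use dis in auto)
  moreover have "?q \<ge> 1" using card by simp
  ultimately show ?thesis using cDg by linarith
qed

lemma pow_mod3: "(2::nat)^n mod 3 = (if even n then 1 else 2)"
proof (induction n)
  case 0 show ?case by simp
next
  case (Suc n)
  have "(2::nat)^Suc n mod 3 = (2 * (2^n mod 3)) mod 3" by (simp add: mod_mult_right_eq)
  thus ?case using Suc.IH by auto
qed

definition d1 :: "nat \<Rightarrow> int" where
  "d1 k = 2*((if k=1 then 1 else 0)+(if k=2 then 1 else 0)) - (3*int k - int k*int k)"
definition d2 :: "nat \<Rightarrow> int" where
  "d2 k = (3*(if k=1 then 1 else 0)+4*(if k=2 then 1 else 0)+3*(if k=3 then 1 else 0) - int k) - (3*int k - int k*int k)"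

lemma c4: "(k::nat) \<le> 4 \<Longrightarrow> k = 0 \<or> k = 1 \<or> k = 2 \<or> k = 3 \<or> k = 4" by arith
lemma big5: "(k::nat) \<ge> 5 \<Longrightarrow> int k*int k \<ge> 5*int k" by (intro mult_right_mono) auto

lemma d1_nonneg: "d1 k \<ge> 0"
proof (cases "k \<le> 4")
  case True thus ?thesis using c4[OF True] by (elim disjE) (auto simp: d1_def)
next
  case False thus ?thesis using big5[of k] False by (simp add: d1_def)
qed
lemma d1_zero: "d1 k = 0 \<longleftrightarrow> k \<le> 3"
proof (cases "k \<le> 4")
  case True thus ?thesis using c4[OF True] by (elim disjE) (auto simp: d1_def)
next
  case False thus ?thesis using big5[of k] False by (simp add: d1_def)
qed
lemma d1_4: "k \<le> 4 \<Longrightarrow> d1 k = 4 * (if k = 4 then 1 else 0)"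
  by (drule c4) (elim disjE; auto simp: d1_def)
lemma d2_nonneg: "d2 k \<ge> 0"
proof (cases "k \<le> 4")
  case True thus ?thesis using c4[OF True] by (elim disjE) (auto simp: d2_def)
next
  case False thus ?thesis using big5[of k] False by (simp add: d2_def)
qed
lemma d2_zero: "d2 k = 0 \<longleftrightarrow> k \<le> 4"
proof (cases "k \<le> 4")
  case True thus ?thesis using c4[OF True] by (elim disjE) (auto simp: d2_def)
next
  case False thus ?thesis using big5[of k] False by (simp add: d2_def)
qed
lemma k3: "k \<le> 3 \<Longrightarrow> int k = (if k=1 then 1 else 0)+2*(if k=2 then 1 else 0)+3*(if k=3 then 1 else 0)"
  using c4[of k] by auto

lemma inr: "card ((f::'a::finite \<Rightarrow> 'b) -` {y}) \<noteq> 0 \<longleftrightarrow> y \<in> range f"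
  by (auto simp: card_eq_0_iff)

lemma Mzero: "M r (f::'a::finite \<Rightarrow> 'b::finite) = 0 \<longleftrightarrow> (\<forall>y. card (f -` {y}) \<noteq> r)"
  by (auto simp: M_def card_eq_0_iff)

theorem corollary4p1:
  fixes f :: "'a::{field,finite} \<Rightarrow> 'a" and n :: nat
  assumes card: "card (UNIV :: 'a set) = 2 ^ n"
    and apn: "APN f"
  shows "M 1 f + M 2 f \<ge> 1
    \<and> (even n \<longrightarrow> (M 1 f + M 2 f = 1 \<longleftrightarrow> almost_3_to_1 f))
    \<and> (odd n \<longrightarrow> (M 1 f + M 2 f = 1 \<longleftrightarrow>
          (\<exists>y \<in> range f. card (f -` {y}) = 2 \<and>
             (\<forall>z \<in> range f. z \<noteq> y \<longrightarrow> card (f -` {z}) = 3))))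
    \<and> 3 * M 1 f + 4 * M 2 f + 3 * M 3 f \<ge> 2 ^ n + 2
    \<and> (3 * M 1 f + 4 * M 2 f + 3 * M 3 f = 2 ^ n + 2 \<longleftrightarrow>
          Ncoll f = 3 * 2 ^ n - 2 \<and> (\<forall>r > 4. M r f = 0))
    \<and> (3 * M 1 f + 4 * M 2 f + 3 * M 3 f = 2 ^ n + 2 \<longrightarrow>
          M 1 f + M 2 f = 2 * M 4 f + 1)"
proof -
  define k where "k y = card (f -` {y})" for y
  define q where "q = (2::nat) ^ n"
  define N where "N = Ncoll f"
  have q1: "q \<ge> 1" unfolding q_def by simp
  have S1: "(\<Sum>y\<in>UNIV. int (k y)) = int q"
  proof -
    have "(\<Sum>y\<in>UNIV. k y) = q" using sum_fib[of f] card unfolding k_def q_def by simp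
    hence "int (\<Sum>y\<in>UNIV. k y) = int q" by simp
    thus ?thesis by (simp only: of_nat_sum)
  qed
  have S2: "(\<Sum>y\<in>UNIV. int (k y) * int (k y)) = int N"
  proof -
    have "(\<Sum>y\<in>UNIV. k y * k y) = N" using Ncoll_sum[of f] unfolding k_def N_def by simp
    hence "int (\<Sum>y\<in>UNIV. k y * k y) = int N" by simp
    thus ?thesis by (simp only: of_nat_sum of_nat_mult)
  qed
  have B: "N + 2 \<le> 3 * q" using Ncoll_bound[OF card apn] card unfolding N_def q_def by simp
  have BI: "int N + 2 \<le> 3 * int q"
  proof -
    have "int (N+2) \<le> int (3*q)" using B by (simp only: of_nat_le_iff)
    thus ?thesis by simp
  qed
  have MI: "(\<Sum>y\<in>UNIV. if k y = r then 1 else 0) = int (M r f)" for r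
    using sumI[of "\<lambda>y. k y = r" 1] unfolding M_def k_def by simp
  have E1a: "(\<Sum>y\<in>UNIV. d1 (k y)) = 2*(int (M 1 f) + int (M 2 f)) - 3 * int q + int N"
    unfolding d1_def using S1 S2
    by (simp add: sum_subtractf sum.distrib sum_distrib_left[symmetric] MI)
  have E1: "(\<Sum>y\<in>UNIV. d1 (k y)) = 2*int (M 1 f) + 2*int (M 2 f) - 3 * int q + int N"
    using E1a by (simp only: distrib_left)
  have E2: "(\<Sum>y\<in>UNIV. d2 (k y)) = 3*int (M 1 f) + 4*int (M 2 f) + 3 * int (M 3 f) - 4 * int q + int N"
    unfolding d2_def using S1 S2
    by (simp add: sum_subtractf sum.distrib sum_distrib_left[symmetric] MI)
  have P1: "(\<Sum>y\<in>UNIV. d1 (k y)) \<ge> 0" by (rule sum_nonneg) (simp add: d1_nonneg)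
  have P2: "(\<Sum>y\<in>UNIV. d2 (k y)) \<ge> 0" by (rule sum_nonneg) (simp add: d2_nonneg)
  have Z1: "(\<Sum>y\<in>UNIV. d1 (k y)) = 0 \<longleftrightarrow> (\<forall>y. k y \<le> 3)"
    by (subst sum_nonneg_eq_0_iff) (auto simp: d1_nonneg d1_zero)
  have Z2: "(\<Sum>y\<in>UNIV. d2 (k y)) = 0 \<longleftrightarrow> (\<forall>y. k y \<le> 4)"
    by (subst sum_nonneg_eq_0_iff) (auto simp: d2_nonneg d2_zero)
  have A1: "M 1 f + M 2 f \<ge> 1" using E1 P1 BI by linarith
  have eqcase: "\<forall>y. k y \<le> 3" and Q3: "q = M 1 f + 2 * M 2 f + 3 * M 3 f" if h: "M 1 f + M 2 f = 1"
  proof -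
    have hI: "int (M 1 f) + int (M 2 f) = 1" using h by (metis of_nat_1 of_nat_add)
    have "(\<Sum>y\<in>UNIV. d1 (k y)) = 0" using E1 P1 BI hI by linarith
    thus all3: "\<forall>y. k y \<le> 3" using Z1 by simp
    have "(\<Sum>y\<in>UNIV. int (k y)) = (\<Sum>y\<in>UNIV. (if k y=1 then 1 else 0)+2*(if k y=2 then 1 else 0)+3*(if k y=3 then 1 else 0))"
      using all3 k3 by (intro sum.cong) auto
    hence "int q = int (M 1 f) + 2 * int (M 2 f) + 3 * int (M 3 f)"
      using S1 by (simp add: sum.distrib sum_distrib_left[symmetric] MI)
    thus "q = M 1 f + 2 * M 2 f + 3 * M 3 f" by linarith
  qed
  have qm: "q mod 3 = (if even n then 1 else 2)" unfolding q_def by (rule pow_mod3)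
  have rng: "k y \<noteq> 0 \<longleftrightarrow> y \<in> range f" for y unfolding k_def by (rule inr)
  have M0: "M r f = 0 \<longleftrightarrow> (\<forall>y. k y \<noteq> r)" for r unfolding k_def by (rule Mzero)
  have M1c: "M r f = 1 \<longleftrightarrow> (\<exists>y0. \<forall>y. k y = r \<longleftrightarrow> y = y0)" for r
  proof -
    have "M r f = 1 \<longleftrightarrow> (\<exists>y0. {y. k y = r} = {y0})" unfolding M_def k_def by (simp add: card_1_singleton_iff)
    also have "\<dots> \<longleftrightarrow> (\<exists>y0. \<forall>y. k y = r \<longleftrightarrow> y = y0)" by (auto simp: set_eq_iff)
    finally show ?thesis .
  qed
  have partE: "M 1 f + M 2 f = 1 \<longleftrightarrow> almost_3_to_1 f" if ev: "even n"
  proof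
    assume h: "M 1 f + M 2 f = 1"
    have a3: "\<forall>y. k y \<le> 3" and qq: "q = M 1 f + 2 * M 2 f + 3 * M 3 f" using eqcase[OF h] Q3[OF h] by auto
    have "q mod 3 = 1" using qm ev by simp
    hence "M 2 f = 0" "M 1 f = 1" using qq h by presburger+
    then obtain y0 where y0: "\<And>y. k y = 1 \<longleftrightarrow> y = y0" and n2: "\<And>y. k y \<noteq> 2"
      unfolding M1c M0 by blast
    show "almost_3_to_1 f" unfolding almost_3_to_1_def k_def[symmetric]
    proof
      have "y0 \<in> range f" using y0[of y0] rng[of y0] by simp
      thus "\<exists>!y. y \<in> range f \<and> k y = 1" using y0 by (intro ex1I[of _ y0]) auto
      show "\<forall>z\<in>range f. k z \<noteq> 1 \<longrightarrow> k z = 3"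
      proof (intro ballI impI)
        fix z assume "z \<in> range f" "k z \<noteq> 1"
        hence "k z \<noteq> 0" "k z \<noteq> 1" "k z \<noteq> 2" "k z \<le> 3" using rng n2 a3 by auto
        thus "k z = 3" by arith
      qed
    qed
  next
    assume h: "almost_3_to_1 f"
    hence h1: "\<exists>!y. y \<in> range f \<and> k y = 1" and h2: "\<forall>z\<in>range f. k z \<noteq> 1 \<longrightarrow> k z = 3"
      unfolding almost_3_to_1_def k_def by auto
    have "M 2 f = 0" unfolding M0
    proof
      fix y show "k y \<noteq> 2"
      proof
        assume "k y = 2"
        hence "y \<in> range f" using rng[of y] by simp
        hence "k y \<noteq> 1 \<longrightarrow> k y = 3" using h2 by blast
        thus False using \<open>k y = 2\<close> by simp
      qed
    qed
    moreover have "M 1 f = 1" unfolding M1c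
    proof -
      from h1 obtain y0 where y0: "y0 \<in> range f \<and> k y0 = 1" and u: "\<forall>y. y \<in> range f \<and> k y = 1 \<longrightarrow> y = y0"
        unfolding Ex1_def by blast
      have "k y = 1 \<longleftrightarrow> y = y0" for y
      proof
        assume "k y = 1"
        moreover hence "y \<in> range f" using rng[of y] by simp
        ultimately show "y = y0" using u by blast
      qed (use y0 in simp)
      thus "\<exists>y0. \<forall>y. k y = 1 \<longleftrightarrow> y = y0" by blast
    qed
    ultimately show "M 1 f + M 2 f = 1" by simp
  qed
  have partO: "M 1 f + M 2 f = 1 \<longleftrightarrow> (\<exists>y \<in> range f. k y = 2 \<and> (\<forall>z \<in> range f. z \<noteq> y \<longrightarrow> k z = 3))" if od: "odd n"
  proof
    assume h: "M 1 f + M 2 f = 1"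
    have a3: "\<forall>y. k y \<le> 3" and qq: "q = M 1 f + 2 * M 2 f + 3 * M 3 f" using eqcase[OF h] Q3[OF h] by auto
    have "q mod 3 = 2" using qm od by simp
    hence "M 2 f = 1" "M 1 f = 0" using qq h by presburger+
    then obtain y0 where y0: "\<And>y. k y = 2 \<longleftrightarrow> y = y0" and n1: "\<And>y. k y \<noteq> 1"
      unfolding M1c M0 by blast
    have "y0 \<in> range f" using y0[of y0] rng[of y0] by simp
    moreover have "\<forall>z \<in> range f. z \<noteq> y0 \<longrightarrow> k z = 3"
    proof (intro ballI impI)
      fix z assume "z \<in> range f" "z \<noteq> y0"
      hence "k z \<noteq> 0" "k z \<noteq> 1" "k z \<noteq> 2" "k z \<le> 3" using rng n1 y0 a3 by auto
      thus "k z = 3" by arith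
    qed
    ultimately show "\<exists>y \<in> range f. k y = 2 \<and> (\<forall>z \<in> range f. z \<noteq> y \<longrightarrow> k z = 3)" using y0 by blast
  next
    assume "\<exists>y \<in> range f. k y = 2 \<and> (\<forall>z \<in> range f. z \<noteq> y \<longrightarrow> k z = 3)"
    then obtain y0 where y0: "y0 \<in> range f" "k y0 = 2" and oth: "\<forall>z \<in> range f. z \<noteq> y0 \<longrightarrow> k z = 3" by blast
    have kk: "k y = (if y = y0 then 2 else if y \<in> range f then 3 else 0)" for y
      using oth rng[of y] y0 by auto
    have "M 1 f = 0" unfolding M0 using kk by simp
    moreover have "M 2 f = 1" unfolding M1c using kk by auto
    ultimately show "M 1 f + M 2 f = 1" by simp
  qed
  have B1: "3 * M 1 f + 4 * M 2 f + 3 * M 3 f \<ge> 2 ^ n + 2" using E2 P2 BI unfolding q_def by linarith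
  have all4: "(\<forall>y. k y \<le> 4) \<longleftrightarrow> (\<forall>r > 4. M r f = 0)"
    unfolding M0
  proof
    assume "\<forall>y. k y \<le> 4" thus "\<forall>r>4. \<forall>y. k y \<noteq> r" by (metis not_le)
  next
    assume a: "\<forall>r>4. \<forall>y. k y \<noteq> r"
    show "\<forall>y. k y \<le> 4"
    proof
      fix y show "k y \<le> 4" using a[rule_format, of "k y" y] by (cases "k y > 4") auto
    qed
  qed
  have B2: "3 * M 1 f + 4 * M 2 f + 3 * M 3 f = 2 ^ n + 2 \<longleftrightarrow> Ncoll f = 3 * 2 ^ n - 2 \<and> (\<forall>r > 4. M r f = 0)"
    unfolding all4[symmetric] Z2[symmetric] N_def[symmetric] q_def[symmetric]
    using E2 P2 BI q1 by linarith
  have B3: "M 1 f + M 2 f = 2 * M 4 f + 1" if h: "3 * M 1 f + 4 * M 2 f + 3 * M 3 f = 2 ^ n + 2"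
  proof -
    have c: "Ncoll f = 3 * 2 ^ n - 2 \<and> (\<forall>r>4. M r f = 0)" using h B2 by blast
    have a4: "\<forall>y. k y \<le> 4" using c all4 by blast
    have NN: "N + 2 = 3 * q" using c q1 unfolding N_def q_def by linarith
    have "(\<Sum>y\<in>UNIV. d1 (k y)) = (\<Sum>y\<in>UNIV. 4 * (if k y = 4 then 1 else 0))"
      using a4 d1_4 by (intro sum.cong) auto
    hence "(\<Sum>y\<in>UNIV. d1 (k y)) = 4 * int (M 4 f)" by (simp add: sum_distrib_left[symmetric] MI)
    thus ?thesis using E1 NN by linarith
  qed
  show ?thesis using A1 partE partO B1 B2 B3 unfolding k_def by blast
qed
end
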